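(* Let $X$ be a set. For every continuous map $f\colon\mathbb{V}([0,1]^X)\to[0,1]$ there exist an at most countable set $Y$, a continuous map $s\colon[0,1]^Y\to[0,1]$ and a family $(h_y\colon[0,1]^X\to[0,1])_{y\in Y}$ of continuous maps such that $f=s\circ\langle\Box\circ\mathbb{V}h_y\rangle_{y\in Y}$.
   Context: $[0,1]^X$ has the product topology. For a compact Hausdorff space $Z$, $\mathbb{V}Z$ is the set of all closed subsets of $Z$ (including $\varnothing$) with the Vietoris topology, generated by $\{K\mid K\subseteq U\}$ and $\{K\mid K\cap U\neq\varnothing\}$ for $U$ open in $Z$; for continuous $h\colon Z\to W$, $\mathbb{V}h(K)=h[K]$. $\Box\colon\mathbb{V}([0,1])\to[0,1]$ is $K\mapsto\inf K$ (with $\inf\varnothing=1$). For a family of maps $(g_y\colon A\to B_y)_{y\in Y}$, $\langle g_y\rangle_{y\in Y}\colon A\to\prod_y B_y$ is the induced map. *)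

theory Defs
  imports "HOL-Analysis.Analysis"
begin

definition vietoris :: "'a topology \<Rightarrow> 'a set topology" where
  "vietoris Z = topology_generated_by
     ({ {K. closedin Z K \<and> K \<subseteq> U} | U. openin Z U }
      \<union> { {K. closedin Z K \<and> K \<inter> U \<noteq> {}} | U. openin Z U })"

definition box :: "real set \<Rightarrow> real" where
  "box K = (if K = {} then 1 else Inf K)"

text \<open>The cube [0,1]^X with the product topology (points are extensional functions on X).\<close>
definition cube :: "'x set \<Rightarrow> ('x \<Rightarrow> real) topology" where
  "cube X = product_topology (\<lambda>_. top_of_set {0..1}) X"

end

theory Submission
  imports Defs
begin

lemma unit_compact: "compact_space (top_of_set {0..1::real})"
  by (simp add: compact_space_subtopology)

lemma unit_Hausdorff: "Hausdorff_space (top_of_set {0..1::real})"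
  by (simp add: Hausdorff_space_subtopology)

lemma cube_compact: "compact_space (cube X)"
  unfolding cube_def by (simp add: compact_space_product_topology unit_compact)

lemma cube_Hausdorff: "Hausdorff_space (cube X)"
  unfolding cube_def by (simp add: Hausdorff_space_product_topology unit_Hausdorff)


lemma gen_eq_subbase:
  "generate_topology_on B S \<longleftrightarrow> (arbitrary union_of (finite intersection_of (\<lambda>x. x \<in> B) relative_to \<Union>B)) S"
proof
  assume "generate_topology_on B S"
  then show "(arbitrary union_of (finite intersection_of (\<lambda>x. x \<in> B) relative_to \<Union>B)) S"
  proof induction
    case Empty
    then show ?case by simp
  next
    case (Int a b)
    then show ?case using istopology_subbase unfolding istopology_def by blast
  next
    case (UN K)
    then show ?case using istopology_subbase unfolding istopology_def by blast
  next
    case (Basis s)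
    then have "(finite intersection_of (\<lambda>x. x \<in> B) relative_to \<Union>B) (\<Union>B \<inter> s)"
      by (intro relative_to_inc finite_intersection_of_inc) 
    moreover have "\<Union>B \<inter> s = s" using Basis by blast
    ultimately show ?case by (metis arbitrary_union_of_inc)
  qed
next
  assume "(arbitrary union_of (finite intersection_of (\<lambda>x. x \<in> B) relative_to \<Union>B)) S"
  then obtain \<U> where U: "\<U> \<subseteq> Collect (finite intersection_of (\<lambda>x. x \<in> B) relative_to \<Union>B)" "\<Union>\<U> = S"
    unfolding union_of_def arbitrary_def by blast
  have UB: "generate_topology_on B (\<Union>B)"
    using generate_topology_on.UN[OF generate_topology_on.Basis, of B B] by simp
  have "generate_topology_on B u" if "u \<in> \<U>" for u
  proof -
    obtain F where F: "finite F" "F \<subseteq> B" "u = \<Union>B \<inter> \<Inter>F"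
      using U(1) \<open>u \<in> \<U>\<close> unfolding relative_to_def intersection_of_def by blast
    show ?thesis
    proof (cases "F = {}")
      case True then show ?thesis using F UB by simp
    next
      case False
      have "generate_topology_on B (\<Inter>F)"
        using F False by (intro generate_topology_on_Inter) (auto intro: generate_topology_on.Basis)
      then show ?thesis using F UB generate_topology_on.Int by blast
    qed
  qed
  then show "generate_topology_on B S" using U(2) generate_topology_on.UN by blast
qed

lemma vietoris_topspace: "topspace (vietoris Z) = {K. closedin Z K}"
  unfolding vietoris_def topology_generated_by_topspace
  by (auto intro!: exI[of _ "topspace Z"] dest: closedin_subset)

lemma vietoris_open_sub: "openin Z U \<Longrightarrow> openin (vietoris Z) {K. closedin Z K \<and> K \<subseteq> U}"
  unfolding vietoris_def by (rule topology_generated_by_Basis) blast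

lemma vietoris_open_hit: "openin Z U \<Longrightarrow> openin (vietoris Z) {K. closedin Z K \<and> K \<inter> U \<noteq> {}}"
  unfolding vietoris_def by (rule topology_generated_by_Basis) blast


lemma box_props:
  assumes Z: "compact_space Z" and h: "continuous_map Z (top_of_set {0..1}) h"
    and K: "closedin Z K"
  shows "box (h ` K) \<in> {0..1}"
    and "K \<noteq> {} \<Longrightarrow> \<exists>x\<in>K. h x = box (h ` K)"
    and "x \<in> K \<Longrightarrow> box (h ` K) \<le> h x"
proof -
  have "compactin Z K" using Z K closedin_compact_space by blast
  then have "compactin (top_of_set {0..1}) (h ` K)" using h image_compactin by blast
  then have cK: "compact (h ` K)" and sub: "h ` K \<subseteq> {0..1}"
    by (simp_all add: compactin_subtopology)
  have inK: "box (h ` K) \<in> h ` K" if "K \<noteq> {}"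
    using that cK unfolding box_def
    by (simp add: closed_contains_Inf compact_imp_bounded bounded_imp_bdd_below compact_imp_closed)
  show "K \<noteq> {} \<Longrightarrow> \<exists>x\<in>K. h x = box (h ` K)" using inK by force
  show "x \<in> K \<Longrightarrow> box (h ` K) \<le> h x"
    unfolding box_def using cK
    by (auto intro!: cInf_lower bounded_imp_bdd_below compact_imp_bounded)
  show "box (h ` K) \<in> {0..1}"
    using inK sub by (cases "K = {}") (auto simp: box_def)
qed

lemma box_cont:
  assumes Z: "compact_space Z" and h: "continuous_map Z (top_of_set {0..1}) h"
  shows "continuous_map (vietoris Z) (top_of_set {0..1}) (\<lambda>K. box (h ` K))"
  unfolding continuous_map_upper_lower_semicontinuous_lt_gen
proof (intro conjI allI ballI)
  fix K assume "K \<in> topspace (vietoris Z)"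
  then show "box (h ` K) \<in> {0..1}" using box_props[OF Z h] by (simp add: vietoris_topspace)
next
  fix a :: real
  show "openin (vietoris Z) {K \<in> topspace (vietoris Z). box (h ` K) > a}"
  proof (cases "a < 1")
    case False
    have e: "{K \<in> topspace (vietoris Z). box (h ` K) > a} = {}"
    proof -
      have "box (h ` K) \<le> 1" if "K \<in> topspace (vietoris Z)" for K
        using box_props(1)[OF Z h, of K] that by (simp add: vietoris_topspace)
      then show ?thesis using False by fastforce
    qed
    show ?thesis by (subst e) (rule openin_empty)
  next
    case True
    have "{K \<in> topspace (vietoris Z). box (h ` K) > a} = {K. closedin Z K \<and> K \<subseteq> {x \<in> topspace Z. h x > a}}"
    proof (safe, simp_all add: vietoris_topspace)
      fix K x assume K: "closedin Z K" "a < box (h ` K)" "x \<in> K"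
      then show "x \<in> topspace Z" using closedin_subset by blast
      show "a < h x" using box_props(3)[OF Z h K(1) K(3)] K by simp
    next
      fix K assume K: "closedin Z K" "K \<subseteq> {x \<in> topspace Z. a < h x}"
      show "a < box (h ` K)"
      proof (cases "K = {}")
        case True then show ?thesis using \<open>a < 1\<close> by (simp add: box_def)
      next
        case False then show ?thesis using box_props(2)[OF Z h K(1)] K by force
      qed
    qed
    moreover have "openin Z {x \<in> topspace Z. h x > a}"
      using h continuous_map_upper_lower_semicontinuous_lt_gen by blast
    ultimately show ?thesis by (simp add: vietoris_open_sub)
  qed
next
  fix a :: real
  show "openin (vietoris Z) {K \<in> topspace (vietoris Z). box (h ` K) < a}"
  proof (cases "a \<le> 1")
    case False
    have e: "{K \<in> topspace (vietoris Z). box (h ` K) < a} = topspace (vietoris Z)"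
    proof -
      have "box (h ` K) \<le> 1" if "K \<in> topspace (vietoris Z)" for K
        using box_props(1)[OF Z h, of K] that by (simp add: vietoris_topspace)
      then show ?thesis using False by fastforce
    qed
    show ?thesis by (subst e) (rule openin_topspace)
  next
    case True
    have "{K \<in> topspace (vietoris Z). box (h ` K) < a} = {K. closedin Z K \<and> K \<inter> {x \<in> topspace Z. h x < a} \<noteq> {}}"
    proof (safe, simp_all add: vietoris_topspace)
      fix K assume K: "closedin Z K" "box (h ` K) < a" "K \<inter> {x \<in> topspace Z. h x < a} = {}"
      have "K \<noteq> {}"
      proof
        assume "K = {}"
        then have "box (h ` K) = 1" by (simp add: box_def)
        then show False using K(2) True by simp
      qed
      then obtain x where x: "x \<in> K" "h x = box (h ` K)" using box_props(2)[OF Z h K(1)] by blast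
      have "x \<in> topspace Z" using K(1) x(1) closedin_subset by blast
      then have "x \<in> K \<inter> {x \<in> topspace Z. h x < a}" using x K(2) by simp
      then show False using K(3) by simp
    next
      fix K x assume K: "closedin Z K" "x \<in> K" "x \<in> topspace Z" "h x < a"
      show "box (h ` K) < a" using box_props(3)[OF Z h K(1) K(2)] K by simp
    qed
    moreover have "openin Z {x \<in> topspace Z. h x < a}"
      using h continuous_map_upper_lower_semicontinuous_lt_gen by blast
    ultimately show ?thesis by (simp add: vietoris_open_hit)
  qed
qed


lemma vietoris_compact:
  assumes Z: "compact_space Z"
  shows "compact_space (vietoris Z)"
proof -
  define B where "B = { {K. closedin Z K \<and> K \<subseteq> U} | U. openin Z U }
      \<union> { {K. closedin Z K \<and> K \<inter> U \<noteq> {}} | U. openin Z U }"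
  have V: "vietoris Z = topology_generated_by B" unfolding vietoris_def B_def ..
  have UB: "\<Union>B = topspace (vietoris Z)" unfolding V by simp
  show ?thesis
  proof (rule Alexander_subbase_alt[where \<B> = B and U = "topspace (vietoris Z)"])
    show "topspace (vietoris Z) \<subseteq> \<Union>B" using UB by simp
  next
    show "topology (arbitrary union_of (finite intersection_of (\<lambda>x. x \<in> B) relative_to topspace (vietoris Z))) = vietoris Z"
      unfolding topology_eq openin_subbase
      by (metis V UB gen_eq_subbase openin_topology_generated_by_iff)
  next
    fix C assume CB: "C \<subseteq> B" and cov: "topspace (vietoris Z) \<subseteq> \<Union>C"
    define J where "J = {W. openin Z W \<and> {K. closedin Z K \<and> K \<inter> W \<noteq> {}} \<in> C}"
    define D where "D = topspace Z - \<Union>J"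
    have "closedin Z D" unfolding D_def J_def by (intro closedin_diff) auto
    then have "D \<in> topspace (vietoris Z)" by (simp add: vietoris_topspace)
    then obtain c where "c \<in> C" "D \<in> c" using cov by blast
    have "c \<in> B" using CB \<open>c \<in> C\<close> by blast
    then obtain U0 where U0: "openin Z U0" "c = {K. closedin Z K \<and> K \<subseteq> U0} \<or> c = {K. closedin Z K \<and> K \<inter> U0 \<noteq> {}}"
      unfolding B_def by auto
    have "\<not> (c = {K. closedin Z K \<and> K \<inter> U0 \<noteq> {}})"
    proof
      assume c: "c = {K. closedin Z K \<and> K \<inter> U0 \<noteq> {}}"
      then have "U0 \<in> J" using U0 \<open>c \<in> C\<close> unfolding J_def by blast
      have "D \<inter> U0 \<noteq> {}" using \<open>D \<in> c\<close> c by simp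
      moreover have "U0 \<subseteq> \<Union>J" using \<open>U0 \<in> J\<close> by blast
      ultimately show False unfolding D_def by blast
    qed
    then have c: "c = {K. closedin Z K \<and> K \<subseteq> U0}" using U0 by blast
    then have DU0: "D \<subseteq> U0" using \<open>D \<in> c\<close> by simp
    have "compactin Z (topspace Z - U0)"
      using Z U0(1) by (simp add: closedin_compact_space closedin_diff)
    moreover have "topspace Z - U0 \<subseteq> \<Union>J" using DU0 unfolding D_def by blast
    moreover have "\<forall>W\<in>J. openin Z W" unfolding J_def by blast
    ultimately obtain J' where J': "finite J'" "J' \<subseteq> J" "topspace Z - U0 \<subseteq> \<Union>J'"
      unfolding compactin_def by meson
    define C' where "C' = insert c ((\<lambda>W. {K. closedin Z K \<and> K \<inter> W \<noteq> {}}) ` J')"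
    show "\<exists>C'. finite C' \<and> C' \<subseteq> C \<and> topspace (vietoris Z) \<subseteq> \<Union>C'"
    proof (intro exI conjI)
      show "finite C'" using J' unfolding C'_def by simp
      show "C' \<subseteq> C" using J' \<open>c \<in> C\<close> unfolding C'_def J_def by blast
      show "topspace (vietoris Z) \<subseteq> \<Union>C'"
      proof
        fix K assume "K \<in> topspace (vietoris Z)"
        then have K: "closedin Z K" by (simp add: vietoris_topspace)
        show "K \<in> \<Union>C'"
        proof (cases "K \<subseteq> U0")
          case True then show ?thesis using K c unfolding C'_def by blast
        next
          case False
          then obtain x where x: "x \<in> K" "x \<notin> U0" by blast
          then have "x \<in> topspace Z" using K closedin_subset by blast
          then obtain W where "W \<in> J'" "x \<in> W" using x J' by blast
          then show ?thesis using K x unfolding C'_def by blast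
        qed
      qed
    qed
  qed
qed


lemma box_sub1: "A \<subseteq> {1} \<Longrightarrow> box A = 1"
  unfolding subset_singleton_iff box_def by auto

lemma vietoris_nbhd:
  assumes Z: "compact_space Z" "Hausdorff_space Z"
    and U: "openin (vietoris Z) U" and K: "K \<in> U"
  shows "\<exists>F \<delta>. finite F \<and> (\<forall>h\<in>F. continuous_map Z (top_of_set {0..1}) h) \<and> \<delta> > 0 \<and>
           (\<forall>L. closedin Z L \<and> (\<forall>h\<in>F. \<bar>box (h ` L) - box (h ` K)\<bar> < \<delta>) \<longrightarrow> L \<in> U)"
proof -
  have N: "normal_space Z" using Z compact_Hausdorff_or_regular_imp_normal_space by blast
  have "generate_topology_on
          ({ {K. closedin Z K \<and> K \<subseteq> U} | U. openin Z U }
           \<union> { {K. closedin Z K \<and> K \<inter> U \<noteq> {}} | U. openin Z U }) U"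
    using U unfolding vietoris_def openin_topology_generated_by_iff .
  then show ?thesis using K
  proof (induction arbitrary: K)
    case Empty
    then show ?case by simp
  next
    case (Int a b)
    from Int.IH(1)[OF IntD1[OF Int.prems]] obtain F1 d1 where
      1: "finite F1" "\<forall>h\<in>F1. continuous_map Z (top_of_set {0..1}) h" "d1 > 0"
         "\<forall>L. closedin Z L \<and> (\<forall>h\<in>F1. \<bar>box (h ` L) - box (h ` K)\<bar> < d1) \<longrightarrow> L \<in> a"
      by blast
    from Int.IH(2)[OF IntD2[OF Int.prems]] obtain F2 d2 where
      2: "finite F2" "\<forall>h\<in>F2. continuous_map Z (top_of_set {0..1}) h" "d2 > 0"
         "\<forall>L. closedin Z L \<and> (\<forall>h\<in>F2. \<bar>box (h ` L) - box (h ` K)\<bar> < d2) \<longrightarrow> L \<in> b"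
      by blast
    show ?case
    proof (intro exI conjI allI impI)
      show "finite (F1 \<union> F2)" using 1 2 by simp
      show "\<forall>h\<in>F1 \<union> F2. continuous_map Z (top_of_set {0..1}) h" using 1(2) 2(2) by blast
      show "min d1 d2 > 0" using 1 2 by simp
      fix L assume L: "closedin Z L \<and> (\<forall>h\<in>F1 \<union> F2. \<bar>box (h ` L) - box (h ` K)\<bar> < min d1 d2)"
      then have "L \<in> a" using 1(4) by auto
      moreover have "L \<in> b" using L 2(4) by auto
      ultimately show "L \<in> a \<inter> b" by (rule IntI)
    qed
  next
    case (UN Ks)
    from UN.prems obtain k where k: "k \<in> Ks" "K \<in> k" by blast
    from UN.IH[OF k] obtain F d where Fd: "finite F" "\<forall>h\<in>F. continuous_map Z (top_of_set {0..1}) h" "d > 0"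
         "\<forall>L. closedin Z L \<and> (\<forall>h\<in>F. \<bar>box (h ` L) - box (h ` K)\<bar> < d) \<longrightarrow> L \<in> k"
      by blast
    show ?case
    proof (intro exI conjI allI impI)
      show "finite F" "\<forall>h\<in>F. continuous_map Z (top_of_set {0..1}) h" "d > 0" using Fd by auto
      fix L assume "closedin Z L \<and> (\<forall>h\<in>F. \<bar>box (h ` L) - box (h ` K)\<bar> < d)"
      then have "L \<in> k" using Fd(4) by blast
      then show "L \<in> \<Union>Ks" using k(1) by blast
    qed
  next
    case (Basis s)
    then obtain W where W: "openin Z W"
      "s = {K. closedin Z K \<and> K \<subseteq> W} \<or> s = {K. closedin Z K \<and> K \<inter> W \<noteq> {}}" by auto
    show ?case
    proof (cases "s = {K. closedin Z K \<and> K \<subseteq> W}")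
      case True
      then have K: "closedin Z K" "K \<subseteq> W" using Basis by auto
      have c1: "closedin Z (topspace Z - W)" using W(1) by blast
      have dj: "disjnt (topspace Z - W) K" using K(2) by (auto simp: disjnt_def)
      obtain f :: "_ \<Rightarrow> real" where f: "continuous_map Z (top_of_set {0..1}) f"
        "f ` (topspace Z - W) \<subseteq> {0}" "f ` K \<subseteq> {1}"
        using Urysohn_lemma[OF N c1 K(1) dj, of 0 1] by auto
      have fK: "box (f ` K) = 1" using box_sub1[OF f(3)] .
      show ?thesis
      proof (intro exI conjI allI impI)
        show "finite {f}" by simp
        show "\<forall>h\<in>{f}. continuous_map Z (top_of_set {0..1}) h" using f by simp
        show "(1/2::real) > 0" by simp
        fix L assume L: "closedin Z L \<and> (\<forall>h\<in>{f}. \<bar>box (h ` L) - box (h ` K)\<bar> < 1/2)"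
        then have "\<bar>box (f ` L) - box (f ` K)\<bar> < 1/2" by simp
        then have "box (f ` K) - 1/2 < box (f ` L)" unfolding abs_diff_less_iff by (rule conjunct1)
        then have gL: "box (f ` L) > 1/2" using fK by linarith
        have "L \<subseteq> W"
        proof
          fix x assume "x \<in> L"
          then have fx: "f x > 1/2" using box_props(3)[OF Z(1) f(1), of L x] L gL by simp
          have xt: "x \<in> topspace Z" using \<open>x \<in> L\<close> L closedin_subset by blast
          show "x \<in> W"
          proof (rule ccontr)
            assume "x \<notin> W"
            then have "f x = 0" using f(2) xt by blast
            then show False using fx by simp
          qed
        qed
        then show "L \<in> s" using True L by simp
      qed
    next
      case False
      then have s: "s = {K. closedin Z K \<and> K \<inter> W \<noteq> {}}" using W(2) by meson
      then have K: "closedin Z K" "K \<inter> W \<noteq> {}" using Basis.prems by simp_all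
      then obtain x0 where x0: "x0 \<in> K" "x0 \<in> W" by blast
      have x0t: "x0 \<in> topspace Z" using closedin_subset[OF K(1)] x0(1) by blast
      have c0: "closedin Z {x0}" by (rule closedin_Hausdorff_singleton[OF Z(2) x0t])
      have c1: "closedin Z (topspace Z - W)" using W(1) by blast
      have dj: "disjnt {x0} (topspace Z - W)" using x0 by (auto simp: disjnt_def)
      obtain f :: "_ \<Rightarrow> real" where f: "continuous_map Z (top_of_set {0..1}) f"
        "f ` {x0} \<subseteq> {0}" "f ` (topspace Z - W) \<subseteq> {1}"
        using Urysohn_lemma[OF N c0 c1 dj, of 0 1] by (metis zero_le_one)
      have fK: "box (f ` K) = 0"
      proof -
        have "f x0 = 0" using f(2) by simp
        moreover have "box (f ` K) \<le> f x0" using box_props(3)[OF Z(1) f(1) K(1) x0(1)] .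
        moreover have "box (f ` K) \<in> {0..1}" using box_props(1)[OF Z(1) f(1) K(1)] .
        ultimately show ?thesis by simp
      qed
      show ?thesis
      proof (intro exI conjI allI impI)
        show "finite {f}" by simp
        show "\<forall>h\<in>{f}. continuous_map Z (top_of_set {0..1}) h" using f by simp
        show "(1/2::real) > 0" by simp
        fix L assume L: "closedin Z L \<and> (\<forall>h\<in>{f}. \<bar>box (h ` L) - box (h ` K)\<bar> < 1/2)"
        then have "\<bar>box (f ` L) - box (f ` K)\<bar> < 1/2" by simp
        then have "box (f ` L) < box (f ` K) + 1/2" unfolding abs_diff_less_iff by (rule conjunct2)
        then have gL: "box (f ` L) < 1/2" using fK by linarith
        have "L \<noteq> {}"
        proof
          assume "L = {}"
          then have "box (f ` L) = 1" by (simp add: box_def)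
          then show False using gL by simp
        qed
        then obtain x where x: "x \<in> L" "f x = box (f ` L)" using box_props(2)[OF Z(1) f(1)] L by blast
        have xt: "x \<in> topspace Z" using x L closedin_subset by blast
        have "x \<in> W"
        proof (rule ccontr)
          assume "x \<notin> W"
          then have "f x = 1" using f(3) xt by blast
          then show False using x(2) gL by simp
        qed
        then show "L \<in> s" using s L x by blast
      qed
    qed
  qed
qed


lemma fin_step:
  fixes f :: "'a set \<Rightarrow> real"
  assumes Zc: "compact_space Z" and ZH: "Hausdorff_space Z"
    and fr: "continuous_map (vietoris Z) euclideanreal f" and e: "e > 0"
  shows "\<exists>H. finite H \<and> (\<forall>h\<in>H. continuous_map Z (top_of_set {0..1}) h) \<and>
           (\<forall>K\<in>topspace (vietoris Z). \<forall>L\<in>topspace (vietoris Z).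
               (\<forall>h\<in>H. box (h ` K) = box (h ` L)) \<longrightarrow> \<bar>f K - f L\<bar> < 2 * e)"
proof -
  let ?V = "vietoris Z"
  let ?T = "topspace (vietoris Z)"
  have nb: "\<forall>K\<in>?T. \<exists>F \<delta>. finite F \<and> (\<forall>h\<in>F. continuous_map Z (top_of_set {0..1}) h) \<and> \<delta> > 0 \<and>
           (\<forall>L. closedin Z L \<and> (\<forall>h\<in>F. \<bar>box (h ` L) - box (h ` K)\<bar> < \<delta>) \<longrightarrow> L \<in> {L \<in> ?T. f L \<in> ball (f K) e})"
  proof
    fix K assume K: "K \<in> ?T"
    have op: "openin ?V {L \<in> ?T. f L \<in> ball (f K) e}"
      by (rule openin_continuous_map_preimage[OF fr]) simp
    have "K \<in> {L \<in> ?T. f L \<in> ball (f K) e}" using K e by simp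
    then show "\<exists>F \<delta>. finite F \<and> (\<forall>h\<in>F. continuous_map Z (top_of_set {0..1}) h) \<and> \<delta> > 0 \<and>
           (\<forall>L. closedin Z L \<and> (\<forall>h\<in>F. \<bar>box (h ` L) - box (h ` K)\<bar> < \<delta>) \<longrightarrow> L \<in> {L \<in> ?T. f L \<in> ball (f K) e})"
      by (rule vietoris_nbhd[OF Zc ZH op])
  qed
  from bchoice[OF nb] obtain F where "\<forall>K\<in>?T. \<exists>\<delta>. finite (F K) \<and> (\<forall>h\<in>F K. continuous_map Z (top_of_set {0..1}) h) \<and> \<delta> > 0 \<and>
           (\<forall>L. closedin Z L \<and> (\<forall>h\<in>F K. \<bar>box (h ` L) - box (h ` K)\<bar> < \<delta>) \<longrightarrow> L \<in> {L \<in> ?T. f L \<in> ball (f K) e})"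
    by blast
  from bchoice[OF this] obtain d where Fd: "\<forall>K\<in>?T. finite (F K) \<and> (\<forall>h\<in>F K. continuous_map Z (top_of_set {0..1}) h) \<and> d K > 0 \<and>
           (\<forall>L. closedin Z L \<and> (\<forall>h\<in>F K. \<bar>box (h ` L) - box (h ` K)\<bar> < d K) \<longrightarrow> L \<in> {L \<in> ?T. f L \<in> ball (f K) e})"
    by blast
  define Ob where "Ob = (\<lambda>K. (\<Inter>h\<in>F K. {L \<in> ?T. box (h ` L) \<in> ball (box (h ` K)) (d K)}) \<inter> ?T)"
  have Oopen: "openin ?V (Ob K)" if "K \<in> ?T" for K
    unfolding Ob_def
  proof (rule openin_INT)
    show "finite (F K)" using Fd that by blast
    fix h assume "h \<in> F K"
    then have hc: "continuous_map Z (top_of_set {0..1}) h" using Fd that by blast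
    have "continuous_map ?V euclideanreal (\<lambda>K. box (h ` K))"
      using box_cont[OF Zc hc] continuous_map_in_subtopology by blast
    then show "openin ?V {L \<in> ?T. box (h ` L) \<in> ball (box (h ` K)) (d K)}"
      by (rule openin_continuous_map_preimage) simp
  qed
  have Oin: "K \<in> Ob K" if "K \<in> ?T" for K
    using that Fd unfolding Ob_def by simp
  have Osub: "L \<in> ?T \<and> (\<forall>h\<in>F K. \<bar>box (h ` L) - box (h ` K)\<bar> < d K)" if "L \<in> Ob K" for K L
    using that unfolding Ob_def by (simp add: dist_real_def abs_minus_commute)
  have "compactin ?V ?T" using vietoris_compact[OF Zc] compact_space_def by blast
  moreover have "\<forall>U\<in>Ob ` ?T. openin ?V U" using Oopen by blast
  moreover have "?T \<subseteq> \<Union>(Ob ` ?T)" using Oin by blast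
  ultimately obtain \<U> where U: "finite \<U>" "\<U> \<subseteq> Ob ` ?T" "?T \<subseteq> \<Union>\<U>"
    unfolding compactin_def by meson
  then obtain T' where T': "T' \<subseteq> ?T" "finite T'" "\<U> = Ob ` T'"
    using finite_subset_image by metis
  define H where "H = \<Union>(F ` T')"
  show ?thesis
  proof (intro exI conjI ballI impI)
    show "finite H" unfolding H_def using T' Fd by blast
    fix h assume "h \<in> H"
    then show "continuous_map Z (top_of_set {0..1}) h" unfolding H_def using T' Fd by blast
  next
    fix K L assume K: "K \<in> ?T" and L: "L \<in> ?T" and eq: "\<forall>h\<in>H. box (h ` K) = box (h ` L)"
    obtain K0 where K0: "K0 \<in> T'" "K \<in> Ob K0" using U(3) T'(3) K by blast
    have K0T: "K0 \<in> ?T" using K0 T' by blast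
    have sub: "F K0 \<subseteq> H" unfolding H_def using K0 by blast
    have cK: "closedin Z K" "closedin Z L" using K L by (simp_all add: vietoris_topspace)
    have 1: "\<forall>h\<in>F K0. \<bar>box (h ` K) - box (h ` K0)\<bar> < d K0" using Osub[OF K0(2)] by blast
    have 2: "\<forall>h\<in>F K0. \<bar>box (h ` L) - box (h ` K0)\<bar> < d K0"
    proof
      fix h assume "h \<in> F K0"
      then show "\<bar>box (h ` L) - box (h ` K0)\<bar> < d K0" using 1 eq sub by force
    qed
    have "f K \<in> ball (f K0) e" using Fd K0T cK(1) 1 by blast
    moreover have "f L \<in> ball (f K0) e" using Fd K0T cK(2) 2 by blast
    ultimately show "\<bar>f K - f L\<bar> < 2 * e" by (simp add: dist_real_def abs_diff_less_iff)
  qed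
qed


theorem theorem5p10:
  fixes X :: "'x set"
    and f :: "('x \<Rightarrow> real) set \<Rightarrow> real"
  assumes "continuous_map (vietoris (cube X)) (top_of_set {0..1}) f"
  shows "\<exists>(Y :: nat set) (s :: (nat \<Rightarrow> real) \<Rightarrow> real) (h :: nat \<Rightarrow> ('x \<Rightarrow> real) \<Rightarrow> real).
           countable Y
         \<and> continuous_map (cube Y) (top_of_set {0..1}) s
         \<and> (\<forall>y\<in>Y. continuous_map (cube X) (top_of_set {0..1}) (h y))
         \<and> (\<forall>K\<in>topspace (vietoris (cube X)). f K = s (\<lambda>y\<in>Y. box (h y ` K)))"
proof -
  note fc = assms
  let ?Z = "cube X"
  let ?V = "vietoris (cube X)"
  let ?T = "topspace (vietoris (cube X))"
  have Zc: "compact_space ?Z" by (rule cube_compact)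
  have ZH: "Hausdorff_space ?Z" by (rule cube_Hausdorff)
  have fr: "continuous_map ?V euclideanreal f" using fc continuous_map_in_subtopology by blast
  have f01: "f K \<in> {0..1}" if "K \<in> ?T" for K
    using fc that continuous_map_image_subset_topspace by fastforce
  have "\<forall>n::nat. \<exists>H. finite H \<and> (\<forall>h\<in>H. continuous_map ?Z (top_of_set {0..1}) h) \<and>
           (\<forall>K\<in>?T. \<forall>L\<in>?T. (\<forall>h\<in>H. box (h ` K) = box (h ` L)) \<longrightarrow> \<bar>f K - f L\<bar> < 2 * inverse (real (Suc n)))"
  proof
    fix n :: nat
    show "\<exists>H. finite H \<and> (\<forall>h\<in>H. continuous_map ?Z (top_of_set {0..1}) h) \<and>
           (\<forall>K\<in>?T. \<forall>L\<in>?T. (\<forall>h\<in>H. box (h ` K) = box (h ` L)) \<longrightarrow> \<bar>f K - f L\<bar> < 2 * inverse (real (Suc n)))"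
      by (rule fin_step[OF Zc ZH fr]) simp
  qed
  from choice[OF this] obtain Hs where Hs: "\<forall>n. finite (Hs n) \<and> (\<forall>h\<in>Hs n. continuous_map ?Z (top_of_set {0..1}) h) \<and>
           (\<forall>K\<in>?T. \<forall>L\<in>?T. (\<forall>h\<in>Hs n. box (h ` K) = box (h ` L)) \<longrightarrow> \<bar>f K - f L\<bar> < 2 * inverse (real (Suc n)))"
    by blast
  define H where "H = insert (\<lambda>_. 0::real) (\<Union>n. Hs n)"
  have Hne: "H \<noteq> {}" unfolding H_def by blast
  have Hcount: "countable H" unfolding H_def using Hs by (simp add: countable_finite)
  have Hc: "continuous_map ?Z (top_of_set {0..1}) h'" if "h' \<in> H" for h'
  proof (cases "h' = (\<lambda>_. 0)")
    case True then show ?thesis by (simp add: continuous_map_const)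
  next
    case False then show ?thesis using that Hs unfolding H_def by blast
  qed
  define h where "h = from_nat_into H"
  have rh: "range h = H" unfolding h_def using Hne Hcount by simp
  have hc: "continuous_map ?Z (top_of_set {0..1}) (h y)" for y using Hc rh by blast
  have fiber: "f K = f L" if K: "K \<in> ?T" and L: "L \<in> ?T" and eq: "\<forall>y. box (h y ` K) = box (h y ` L)" for K L
  proof -
    have eqH: "\<forall>h'\<in>H. box (h' ` K) = box (h' ` L)" using eq rh by blast
    have lt: "\<bar>f K - f L\<bar> < 2 * inverse (real (Suc n))" for n
    proof -
      have "\<forall>h'\<in>Hs n. box (h' ` K) = box (h' ` L)" using eqH unfolding H_def by blast
      then show ?thesis using Hs K L by blast
    qed
    show ?thesis
    proof (rule ccontr)
      assume "f K \<noteq> f L"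
      then have "\<bar>f K - f L\<bar> / 2 > 0" by simp
      then obtain n where "inverse (real (Suc n)) < \<bar>f K - f L\<bar> / 2" using reals_Archimedean by blast
      moreover have "\<bar>f K - f L\<bar> < 2 * inverse (real (Suc n))" by (rule lt)
      moreover have key: "\<And>i d::real. i < d / 2 \<Longrightarrow> d < 2 * i \<Longrightarrow> False" by linarith
      ultimately show False by blast
    qed
  qed
  define \<Phi> where "\<Phi> = (\<lambda>K. (\<lambda>y\<in>(UNIV::nat set). box (h y ` K)))"
  have \<Phi>c: "continuous_map ?V (cube UNIV) \<Phi>"
    unfolding cube_def[where X="UNIV::nat set"] continuous_map_componentwise
  proof (intro conjI ballI)
    show "\<Phi> ` ?T \<subseteq> extensional UNIV" unfolding \<Phi>_def by auto
  next
    fix k :: nat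
    show "continuous_map ?V (top_of_set {0..1}) (\<lambda>K. \<Phi> K k)"
      unfolding \<Phi>_def using box_cont[OF Zc hc[of k]] by simp
  qed
  define S where "S = \<Phi> ` ?T"
  have VC: "compact_space ?V" by (rule vietoris_compact[OF Zc])
  have cS: "compactin (cube UNIV) S"
    unfolding S_def using image_compactin[OF _ \<Phi>c] VC compact_space_def by blast
  have Ssub: "S \<subseteq> topspace (cube UNIV)" using cS compactin_subset_topspace by blast
  define s0 where "s0 = (\<lambda>z. f (SOME K. K \<in> ?T \<and> \<Phi> K = z))"
  have s0\<Phi>: "s0 (\<Phi> K) = f K" if K: "K \<in> ?T" for K
  proof -
    have ex: "\<exists>K'. K' \<in> ?T \<and> \<Phi> K' = \<Phi> K" using K by blast
    define K' where "K' = (SOME K'. K' \<in> ?T \<and> \<Phi> K' = \<Phi> K)"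
    have K': "K' \<in> ?T" "\<Phi> K' = \<Phi> K" using someI_ex[OF ex] unfolding K'_def by blast+
    have "\<forall>y. box (h y ` K') = box (h y ` K)"
    proof
      fix y
      have "\<Phi> K' y = \<Phi> K y" using K'(2) by simp
      then show "box (h y ` K') = box (h y ` K)" unfolding \<Phi>_def by simp
    qed
    then have "f K' = f K" using fiber[OF K'(1) K] by blast
    then show ?thesis unfolding s0_def K'_def by simp
  qed
  let ?Q = "subtopology (cube UNIV) S"
  have tQ: "topspace ?Q = S" using Ssub by (simp add: inf.absorb2)
  have \<Phi>Q: "continuous_map ?V ?Q \<Phi>"
    using \<Phi>c unfolding continuous_map_in_subtopology S_def by blast
  have QH: "Hausdorff_space ?Q"
    using Hausdorff_space_subtopology[OF cube_Hausdorff] by blast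
  have qm: "quotient_map ?V ?Q \<Phi>"
    by (rule continuous_imp_quotient_map[OF \<Phi>Q VC QH]) (use tQ in \<open>simp add: S_def\<close>)
  have "continuous_map ?V euclideanreal (s0 \<circ> \<Phi>)"
    by (rule continuous_map_eq[OF fr]) (simp add: s0\<Phi>)
  then have s0c: "continuous_map ?Q euclideanreal s0"
    by (rule continuous_compose_quotient_map[OF qm])
  have s0im: "s0 ` S \<subseteq> {0..1}"
    unfolding S_def using s0\<Phi> f01 by auto
  have crs: "completely_regular_space (cube (UNIV::nat set))"
    using normal_imp_completely_regular_space compact_Hausdorff_or_regular_imp_normal_space
      cube_compact cube_Hausdorff by blast
  obtain g where g: "continuous_map (cube UNIV) euclideanreal g" "g ` topspace (cube UNIV) \<subseteq> {0..1}"
    "\<And>x. x \<in> S \<Longrightarrow> g x = s0 x"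
  proof -
    have ne: "{0..1::real} \<noteq> {}" by simp
    show ?thesis
      using Tietze_extension_completely_regular[OF crs cS is_interval_cc ne s0c s0im] that by blast
  qed
  show ?thesis
  proof (intro exI conjI ballI)
    show "countable (UNIV :: nat set)" by simp
    show "continuous_map (cube UNIV) (top_of_set {0..1}) g"
      using g(1,2) unfolding continuous_map_in_subtopology by blast
    fix y :: nat
    show "continuous_map ?Z (top_of_set {0..1}) (h y)" by (rule hc)
  next
    fix K assume K: "K \<in> ?T"
    have "\<Phi> K \<in> S" unfolding S_def using K by blast
    then have "g (\<Phi> K) = f K" using g(3) s0\<Phi>[OF K] by simp
    then show "f K = g (\<lambda>y\<in>UNIV. box (h y ` K))" unfolding \<Phi>_def by simp
  qed
qed

end
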